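(* For every positive integer $n$, the number of pseudo-symmetric gapsets in $\mathcal{G}_{2n+1}(3n+2)$ is $2^{n-1}$.
   Context: A gapset is a finite set $G\subset\mathbb{N}=\{1,2,\dots\}$ such that whenever $z\in G$ and $z=x+y$ with $x,y\in\mathbb{N}$, then $x\in G$ or $y\in G$; its genus is $g=\#G$. Writing $G=\{\ell_1<\dots<\ell_g\}$, the Frobenius number is $F(G)=\ell_g$; $G$ is pseudo-symmetric if $F(G)=2g-2$. $G$ is pure $\kappa$-sparse if $\ell_{i+1}-\ell_i\le\kappa$ for all $i$ with equality for some $i$; $\mathcal{G}_\kappa(g)$ is the set of pure $\kappa$-sparse gapsets of genus $g$. *)

theory Defs
  imports Main
begin

definition gapset :: "nat set \<Rightarrow> bool" where
  "gapset G \<longleftrightarrow> finite G \<and> 0 \<notin> G \<and>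
     (\<forall>z\<in>G. \<forall>x y. 0 < x \<and> 0 < y \<and> z = x + y \<longrightarrow> x \<in> G \<or> y \<in> G)"

text \<open>Genus = card G. Frobenius number = largest gap.\<close>
definition frobenius :: "nat set \<Rightarrow> nat" where
  "frobenius G = Max G"

definition pseudo_symmetric :: "nat set \<Rightarrow> bool" where
  "pseudo_symmetric G \<longleftrightarrow> int (frobenius G) = 2 * int (card G) - 2"

definition pure_sparse :: "nat \<Rightarrow> nat set \<Rightarrow> bool" where
  "pure_sparse \<kappa> G \<longleftrightarrow>
     (let L = sorted_list_of_set G in
       (\<forall>i. Suc i < length L \<longrightarrow> L ! Suc i - L ! i \<le> \<kappa>) \<and>
       (\<exists>i. Suc i < length L \<and> L ! Suc i - L ! i = \<kappa>))"

definition pure_sparse_gapsets :: "nat \<Rightarrow> nat \<Rightarrow> nat set set" where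
  "pure_sparse_gapsets \<kappa> g = {G. gapset G \<and> card G = g \<and> pure_sparse \<kappa> G}"

end

theory Submission imports Defs begin
definition consec :: "nat set \<Rightarrow> nat \<Rightarrow> nat \<Rightarrow> bool" where
  "consec G a b \<longleftrightarrow> a\<in>G \<and> b\<in>G \<and> a<b \<and> (\<forall>x\<in>G. \<not>(a<x \<and> x<b))"

lemma L1:
  assumes "finite G" "Suc i < length (sorted_list_of_set G)"
  shows "consec G (sorted_list_of_set G ! i) (sorted_list_of_set G ! Suc i)"
proof -
  let ?L = "sorted_list_of_set G"
  have s: "sorted_wrt (<) ?L" by simp
  have st: "set ?L = G" using assms(1) by simp
  have a: "?L ! i \<in> G" "?L ! Suc i \<in> G" using assms st nth_mem by (metis Suc_lessD)+
  have lt: "?L ! i < ?L ! Suc i" using sorted_wrt_nth_less[OF s, of i "Suc i"] assms by simp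
  have nb: "\<not> (?L!i < x \<and> x < ?L ! Suc i)" if "x \<in> G" for x
  proof
    assume h: "?L!i < x \<and> x < ?L ! Suc i"
    from that st obtain j where j: "j < length ?L" "?L!j = x" by (metis in_set_conv_nth)
    have "\<not> j \<le> i"
    proof
      assume "j \<le> i"
      then have "?L!j \<le> ?L!i" using sorted_wrt_nth_less[OF s, of j i] assms
        by (cases "j = i") auto
      with h j show False by simp
    qed
    moreover have "\<not> j \<ge> Suc i"
    proof
      assume "j \<ge> Suc i"
      then have "?L!Suc i \<le> ?L!j" using sorted_wrt_nth_less[OF s, of "Suc i" j] j
        by (cases "j = Suc i") auto
      with h j show False by simp
    qed
    ultimately show False by simp
  qed
  show ?thesis unfolding consec_def using a lt nb by blast
qed

lemma L2:
  assumes "finite G" "consec G a b"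
  shows "\<exists>i. Suc i < length (sorted_list_of_set G) \<and> sorted_list_of_set G ! i = a \<and> sorted_list_of_set G ! Suc i = b"
proof -
  let ?L = "sorted_list_of_set G"
  have s: "sorted_wrt (<) ?L" by simp
  have st: "set ?L = G" using assms(1) by simp
  from assms(2) have aG: "a \<in> G" and bG: "b \<in> G" and ab: "a < b" and nb: "\<forall>x\<in>G. \<not>(a<x \<and> x<b)"
    unfolding consec_def by auto
  obtain i where i: "i < length ?L" "?L!i = a" using aG st by (metis in_set_conv_nth)
  obtain j where j: "j < length ?L" "?L!j = b" using bG st by (metis in_set_conv_nth)
  have ij: "i < j"
  proof (rule ccontr)
    assume "\<not> i < j"
    then have "?L!j \<le> ?L!i" using sorted_wrt_nth_less[OF s, of j i] i
      by (cases "j = i") auto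
    with i j ab show False by simp
  qed
  then have si: "Suc i < length ?L" using j by simp
  have "?L ! Suc i \<in> G" using si st nth_mem by metis
  moreover have "a < ?L ! Suc i" using sorted_wrt_nth_less[OF s, of i "Suc i"] si i by simp
  moreover have "?L ! Suc i \<le> b" using sorted_wrt_nth_less[OF s, of "Suc i" j] j ij
    by (cases "j = Suc i") auto
  ultimately have "?L ! Suc i = b" using nb by force
  with si i show ?thesis by blast
qed

lemma pure_sparse_iff:
  assumes "finite G"
  shows "pure_sparse k G \<longleftrightarrow> (\<forall>a b. consec G a b \<longrightarrow> b - a \<le> k) \<and> (\<exists>a b. consec G a b \<and> b - a = k)"
  unfolding pure_sparse_def Let_def
  using L1[OF assms] L2[OF assms] by metis

definition mk :: "nat \<Rightarrow> nat set \<Rightarrow> nat set" where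
  "mk n B = {1..2*n} \<union> B \<union> {x. 3*n+2 \<le> x \<and> x \<le> 4*n \<and> 6*n+2-x \<notin> B} \<union> {3*n+1, 4*n+1, 6*n+2}"

definition II :: "nat \<Rightarrow> nat set" where "II n = {2*n+2..3*n}"

lemma mem_mk: "x \<in> mk n B \<longleftrightarrow> (1 \<le> x \<and> x \<le> 2*n) \<or> x \<in> B \<or> (3*n+2 \<le> x \<and> x \<le> 4*n \<and> 6*n+2-x \<notin> B)
   \<or> x = 3*n+1 \<or> x = 4*n+1 \<or> x = 6*n+2"
  unfolding mk_def by auto

lemma mk_inj: "B \<subseteq> II n \<Longrightarrow> mk n B \<inter> II n = B"
  unfolding II_def by (auto simp: mem_mk)

lemma mk_sol:
  assumes n: "n \<ge> 1" and B: "B \<subseteq> II n"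
  shows "mk n B \<in> {G \<in> pure_sparse_gapsets (2*n+1) (3*n+2). pseudo_symmetric G}"
proof -
  let ?G = "mk n B"
  let ?F = "6*n+2"
  have Br: "x \<in> B \<Longrightarrow> 2*n+2 \<le> x \<and> x \<le> 3*n" for x using B unfolding II_def by auto
  have sub: "?G \<subseteq> {1..?F}" using Br by (auto simp: mem_mk) (fastforce dest: Br)+
  have fin: "finite ?G" using sub finite_subset by blast
  have FG: "?F \<in> ?G" by (simp add: mem_mk)
  have gap: "gapset ?G"
    unfolding gapset_def
  proof (intro conjI ballI allI impI)
    show "finite ?G" by (rule fin)
    show "0 \<notin> ?G" using sub by auto
  next
    fix z x y assume z: "z \<in> ?G" and h: "0 < x \<and> 0 < y \<and> z = x + y"
    show "x \<in> ?G \<or> y \<in> ?G"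
    proof (rule ccontr)
      assume c: "\<not> (x \<in> ?G \<or> y \<in> ?G)"
      then have x1: "x \<ge> 2*n+1" and y1: "y \<ge> 2*n+1" using h by (auto simp: mem_mk)
      then have "z \<ge> 4*n+2" using h by simp
      with z Br have zF: "z = ?F" by (auto simp: mem_mk dest: Br)
      have yx: "y = ?F - x" using zF h by simp
      have "x \<le> 4*n+1" using zF h y1 by simp
      consider "x = 2*n+1" | "2*n+2 \<le> x \<and> x \<le> 3*n" | "x = 3*n+1" | "3*n+2 \<le> x \<and> x \<le> 4*n" | "x = 4*n+1"
        using x1 \<open>x \<le> 4*n+1\<close> by linarith
      then show False
      proof cases
        case 1 then show ?thesis using c yx by (auto simp: mem_mk)
      next
        case 2
        then have "x \<notin> B" using c by (auto simp: mem_mk)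
        moreover have "3*n+2 \<le> y \<and> y \<le> 4*n" using 2 yx by arith
        moreover have "?F - y = x" using yx h zF by simp
        ultimately have "y \<in> ?G" by (auto simp: mem_mk)
        then show ?thesis using c by simp
      next
        case 3 then show ?thesis using c by (auto simp: mem_mk)
      next
        case 4
        then have "?F - x \<in> B" using c by (auto simp: mem_mk)
        then have "y \<in> ?G" using yx by (auto simp: mem_mk)
        then show ?thesis using c by simp
      next
        case 5 then show ?thesis using c by (auto simp: mem_mk)
      qed
    qed
  qed
  have card: "card ?G = 3*n+2"
  proof -
    let ?U = "(\<lambda>x. ?F - x) ` (II n - B)"
    have U: "{x. 3*n+2 \<le> x \<and> x \<le> 4*n \<and> ?F-x \<notin> B} = ?U"
    proof (rule set_eqI, rule iffI)
      fix x assume "x \<in> {x. 3*n+2 \<le> x \<and> x \<le> 4*n \<and> ?F-x \<notin> B}"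
      then have hx: "3*n+2 \<le> x" "x \<le> 4*n" "?F-x \<notin> B" by auto
      then have "?F - x \<in> II n - B" unfolding II_def by auto
      moreover have "x = ?F - (?F - x)" using hx by simp
      ultimately show "x \<in> ?U" by blast
    next
      fix x assume "x \<in> ?U"
      then obtain y where y: "y \<in> II n" "y \<notin> B" "x = ?F - y" by auto
      then have "2*n+2 \<le> y" "y \<le> 3*n" unfolding II_def by auto
      then show "x \<in> {x. 3*n+2 \<le> x \<and> x \<le> 4*n \<and> ?F-x \<notin> B}" using y by auto
    qed
    have injU: "inj_on (\<lambda>x. ?F - x) (II n - B)"
      unfolding II_def inj_on_def by auto
    have cI: "card (II n) = n - 1" unfolding II_def by simp
    have finI: "finite (II n)" unfolding II_def by simp
    have cU: "card ?U = n - 1 - card B"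
      using card_image[OF injU] card_Diff_subset[OF finite_subset[OF B finI] B] cI by simp
    have cB: "card B \<le> n - 1" using card_mono[OF finI B] cI by simp
    have finB: "finite B" using finite_subset[OF B finI] .
    have G: "?G = {1..2*n} \<union> B \<union> ?U \<union> {3*n+1, 4*n+1, ?F}"
      unfolding mk_def U ..
    have d1: "{1..2*n} \<inter> B = {}" using Br by fastforce
    have d2: "({1..2*n} \<union> B) \<inter> ?U = {}"
      using Br unfolding U[symmetric] by fastforce
    have d3: "({1..2*n} \<union> B \<union> ?U) \<inter> {3*n+1, 4*n+1, ?F} = {}"
      using Br n unfolding U[symmetric] by fastforce
    have c3: "card {3*n+1, 4*n+1, ?F} = 3" using n by simp
    have fU: "finite ?U" using finI by simp
    have f12: "finite ({1..2*n} \<union> B)" using finB by simp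
    have f123: "finite ({1..2*n} \<union> B \<union> ?U)" using f12 fU by simp
    have "card ?G = card ({1..2*n} \<union> B \<union> ?U) + card {3*n+1, 4*n+1, ?F}"
      unfolding G by (rule card_Un_disjoint[OF f123 _ d3]) simp
    also have "card ({1..2*n} \<union> B \<union> ?U) = card ({1..2*n} \<union> B) + card ?U"
      by (rule card_Un_disjoint[OF f12 fU d2])
    also have "card ({1..2*n} \<union> B) = 2*n + card B"
      using card_Un_disjoint[OF _ finB d1] by simp
    finally have "card ?G = 2*n + card B + card ?U + 3" using c3 by simp
    then show ?thesis using cU cB n by simp
  qed
  have maxG: "Max ?G = ?F"
    by (rule Max_eqI[OF fin]) (use sub FG in auto)
  have ps: "pseudo_symmetric ?G"
    unfolding pseudo_symmetric_def frobenius_def maxG card by simp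
  have sp: "pure_sparse (2*n+1) ?G"
    unfolding pure_sparse_iff[OF fin]
  proof (intro conjI allI impI)
    fix a b assume ab: "consec ?G a b"
    then have aG: "a \<in> ?G" and bG: "b \<in> ?G" and lt: "a < b" and nb: "\<forall>x\<in>?G. \<not>(a<x \<and> x<b)"
      unfolding consec_def by auto
    have bnd: "c \<in> ?G \<Longrightarrow> a < c \<Longrightarrow> b \<le> c" for c using nb by force
    have a1: "a \<ge> 1" using aG sub by auto
    have "b \<le> ?F" using bG sub by auto
    show "b - a \<le> 2*n+1"
    proof -
      consider "a < 2*n" | "2*n \<le> a \<and> a < 3*n+1" | "3*n+1 \<le> a \<and> a < 4*n+1" | "4*n+1 \<le> a" by linarith
      then show ?thesis
      proof cases
        case 1 then have "a+1 \<in> ?G" using a1 by (simp add: mem_mk)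
        then show ?thesis using bnd[of "a+1"] by simp
      next
        case 2 then show ?thesis using bnd[of "3*n+1"] by (simp add: mem_mk) arith
      next
        case 3 then show ?thesis using bnd[of "4*n+1"] by (simp add: mem_mk) arith
      next
        case 4 then show ?thesis using \<open>b \<le> ?F\<close> by simp
      qed
    qed
  next
    have "consec ?G (4*n+1) ?F"
      unfolding consec_def by (auto simp: mem_mk) (fastforce dest: Br)
    then show "\<exists>a b. consec ?G a b \<and> b - a = 2*n+1" by force
  qed
  show ?thesis unfolding pure_sparse_gapsets_def using gap card sp ps by simp
qed


lemma sol_char:
  assumes n: "n \<ge> 1" and G: "G \<in> {G \<in> pure_sparse_gapsets (2*n+1) (3*n+2). pseudo_symmetric G}"
  shows "G = mk n (G \<inter> II n)"
proof -
  let ?F = "6*n+2"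
  from G have gap: "gapset G" and cG: "card G = 3*n+2" and sp: "pure_sparse (2*n+1) G"
    and ps: "pseudo_symmetric G"
    unfolding pure_sparse_gapsets_def by auto
  have fin: "finite G" and z0: "0 \<notin> G"
    and gp: "\<And>z x y. z \<in> G \<Longrightarrow> 0 < x \<Longrightarrow> 0 < y \<Longrightarrow> z = x + y \<Longrightarrow> x \<in> G \<or> y \<in> G"
    using gap unfolding gapset_def by blast+
  have ne: "G \<noteq> {}" using cG by auto
  have "int (Max G) = 2 * int (3*n+2) - 2" using ps unfolding pseudo_symmetric_def frobenius_def cG .
  then have maxG: "Max G = ?F" by simp
  have FG: "?F \<in> G" using Max_in[OF fin ne] maxG by simp
  have le: "x \<in> G \<Longrightarrow> x \<le> ?F" for x using Max_ge[OF fin] maxG by metis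
  have pos: "x \<in> G \<Longrightarrow> 0 < x" for x using z0 by (cases x) auto
  have cover: "0 < x \<Longrightarrow> x < ?F \<Longrightarrow> x \<notin> G \<Longrightarrow> ?F - x \<in> G" for x
    using gp[OF FG, of x "?F - x"] by auto
  have mid: "3*n+1 \<in> G" using cover[of "3*n+1"] by auto
  define A where "A = G \<inter> {1..3*n}"
  define H where "H = G \<inter> {3*n+2..6*n+1}"
  define C where "C = (\<lambda>x. ?F - x) ` H"
  have GU: "G = A \<union> H \<union> {3*n+1, ?F}"
    using le pos mid FG unfolding A_def H_def by fastforce
  have finA: "finite A" and finH: "finite H" unfolding A_def H_def by auto
  have d1: "A \<inter> H = {}" unfolding A_def H_def by auto
  have d2: "(A \<union> H) \<inter> {3*n+1, ?F} = {}" unfolding A_def H_def by auto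
  have "card G = card A + card H + 2"
    using card_Un_disjoint[OF _ _ d2] card_Un_disjoint[OF finA finH d1] finA finH GU by simp
  then have cAH: "card A + card H = 3*n" using cG by simp
  have injH: "inj_on (\<lambda>x. ?F - x) H" unfolding H_def inj_on_def by auto
  have cC: "card C = card H" unfolding C_def using card_image[OF injH] .
  have finC: "finite C" unfolding C_def using finH by simp
  have AC: "A \<union> C = {1..3*n}"
  proof (rule set_eqI, rule iffI)
    fix y assume "y \<in> A \<union> C"
    then show "y \<in> {1..3*n}" unfolding A_def C_def H_def by auto
  next
    fix y assume y: "y \<in> {1..3*n}"
    show "y \<in> A \<union> C"
    proof (cases "y \<in> G")
      case True then show ?thesis using y unfolding A_def by auto
    next
      case False
      then have "?F - y \<in> G" using cover[of y] y by auto
      then have "?F - y \<in> H" using y unfolding H_def by auto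
      moreover have "y = ?F - (?F - y)" using y by auto
      ultimately show ?thesis unfolding C_def by blast
    qed
  qed
  have "card A + card C = card (A \<union> C) + card (A \<inter> C)"
    by (rule card_Un_Int[OF finA finC])
  then have "card (A \<inter> C) = 0" using AC cAH cC by simp
  then have AC0: "A \<inter> C = {}" using finA by simp
  have excl: "1 \<le> x \<Longrightarrow> x \<le> 3*n \<Longrightarrow> x \<in> G \<Longrightarrow> ?F - x \<notin> G" for x
  proof
    assume x: "1 \<le> x" "x \<le> 3*n" "x \<in> G" and y: "?F - x \<in> G"
    then have "x \<in> A" unfolding A_def by auto
    moreover have "?F - x \<in> H" using x y unfolding H_def by auto
    then have "x \<in> C" unfolding C_def using x by (auto intro!: image_eqI[where x="?F - x"])
    ultimately show False using AC0 by blast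
  qed
  obtain a b where ab: "consec G a b" "b - a = 2*n+1"
    using sp unfolding pure_sparse_iff[OF fin] by blast
  have low: "1 \<le> m \<Longrightarrow> m \<le> 2*n \<Longrightarrow> m \<in> G" for m
  proof (rule ccontr)
    assume m: "1 \<le> m" "m \<le> 2*n" "m \<notin> G"
    from ab have bG: "b \<in> G" and nb: "\<forall>x\<in>G. \<not>(a<x \<and> x<b)" and "a < b" unfolding consec_def by auto
    have "b - m \<notin> G" using nb m ab(2) by auto
    moreover have "0 < b - m" using m ab(2) by simp
    ultimately show False using gp[OF bG, of m "b - m"] m ab(2) by auto
  qed
  have hiout: "4*n+2 \<le> x \<Longrightarrow> x \<le> 6*n+1 \<Longrightarrow> x \<notin> G" for x
  proof
    assume x: "4*n+2 \<le> x" "x \<le> 6*n+1" "x \<in> G"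
    have "?F - x \<in> G" using low[of "?F - x"] x by auto
    moreover have "?F - (?F - x) = x" using x by simp
    moreover have "1 \<le> ?F - x" "?F - x \<le> 3*n" using x by arith+
    ultimately show False using excl[of "?F - x"] x by simp
  qed
  define p where "p = Max (G - {?F})"
  have ne2: "G - {?F} \<noteq> {}" using low[of 1] n by auto
  have pG: "p \<in> G" "p \<noteq> ?F" using Max_in[of "G - {?F}"] fin ne2 unfolding p_def by auto
  have pmax: "x \<in> G \<Longrightarrow> x \<noteq> ?F \<Longrightarrow> x \<le> p" for x
    using Max_ge[of "G - {?F}" x] fin unfolding p_def by auto
  have pF: "p < ?F" using pG le by fastforce
  have "consec G p ?F" unfolding consec_def using pG pF FG pmax
    by (metis leD less_not_refl)
  then have "?F - p \<le> 2*n+1" using sp unfolding pure_sparse_iff[OF fin] by blast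
  then have p4: "p = 4*n+1" using hiout[of p] pG pF by fastforce
  have g4: "4*n+1 \<in> G" using pG p4 by simp
  have g2: "2*n+1 \<notin> G" using excl[of "2*n+1"] g4 n by auto
  show ?thesis
  proof (rule set_eqI)
    fix x
    consider "x = 0" | "1 \<le> x \<and> x \<le> 2*n" | "x = 2*n+1" | "2*n+2 \<le> x \<and> x \<le> 3*n" | "x = 3*n+1"
      | "3*n+2 \<le> x \<and> x \<le> 4*n" | "x = 4*n+1" | "4*n+2 \<le> x \<and> x \<le> 6*n+1" | "x = 6*n+2" | "x > 6*n+2"
      by linarith
    then show "x \<in> G \<longleftrightarrow> x \<in> mk n (G \<inter> II n)"
    proof cases
      case 1 then show ?thesis using z0 by (simp add: mem_mk)
    next
      case 2 then show ?thesis using low by (simp add: mem_mk)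
    next
      case 3 then show ?thesis using g2 n by (auto simp: mem_mk II_def)
    next
      case 4 then show ?thesis by (auto simp: mem_mk II_def)
    next
      case 5 then show ?thesis using mid by (simp add: mem_mk)
    next
      case 6
      have a1: "1 \<le> ?F - x" "?F - x \<le> 3*n" "?F - (?F - x) = x" "0 < x" "x < ?F" using 6 by arith+
      have e: "x \<in> G \<longleftrightarrow> ?F - x \<notin> G"
        using cover[of x] excl[of "?F - x"] a1 by auto
      have "?F - x \<in> II n" using 6 unfolding II_def by auto
      then show ?thesis using e 6 by (auto simp: mem_mk II_def)
    next
      case 7 then show ?thesis using g4 by (simp add: mem_mk)
    next
      case 8 then show ?thesis using hiout by (auto simp: mem_mk II_def)
    next
      case 9 then show ?thesis using FG by (simp add: mem_mk)
    next
      case 10 then show ?thesis using le[of x] by (auto simp: mem_mk II_def)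
    qed
  qed
qed

theorem mainTheorem5:
  fixes n :: nat
  assumes "n \<ge> 1"
  shows "card {G \<in> pure_sparse_gapsets (2*n+1) (3*n+2). pseudo_symmetric G} = 2 ^ (n - 1)"
proof -
  have eq: "{G \<in> pure_sparse_gapsets (2*n+1) (3*n+2). pseudo_symmetric G} = mk n ` Pow (II n)"
  proof
    show "{G \<in> pure_sparse_gapsets (2*n+1) (3*n+2). pseudo_symmetric G} \<subseteq> mk n ` Pow (II n)"
    proof
      fix G assume "G \<in> {G \<in> pure_sparse_gapsets (2*n+1) (3*n+2). pseudo_symmetric G}"
      then have "G = mk n (G \<inter> II n)" using sol_char assms by blast
      then show "G \<in> mk n ` Pow (II n)" by blast
    qed
    show "mk n ` Pow (II n) \<subseteq> {G \<in> pure_sparse_gapsets (2*n+1) (3*n+2). pseudo_symmetric G}"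
      using mk_sol assms by blast
  qed
  have inj: "inj_on (mk n) (Pow (II n))"
    by (rule inj_onI) (metis PowD mk_inj)
  have "card (mk n ` Pow (II n)) = card (Pow (II n))" by (rule card_image[OF inj])
  also have "\<dots> = 2 ^ card (II n)" by (simp add: card_Pow II_def)
  also have "card (II n) = n - 1" unfolding II_def by simp
  finally show ?thesis using eq by simp
qed

end
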